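(* Let $G=G_1\ast\cdots\ast G_k\ast F_N$ be a countable group ($F_N$ free of finite rank), $\mathcal{F}=\{[G_1],\dots,[G_k]\}$. Let $T$ be a minimal $(G,\mathcal{F})$-tree and $(T_n)_{n\in\mathbb{N}}$ a sequence of minimal $(G,\mathcal{F})$-trees converging to $T$ in the equivariant Gromov–Hausdorff topology. Let $g\in G$ and assume some power $g^p$ ($p\ge 1$) fixes a nondegenerate arc $I$ in $T$. If $g$ is hyperbolic in $T_n$ for all sufficiently large $n$, then $g$ fixes $I$.
   Context: Peripheral: conjugate into some $G_i$. $(G,\mathcal{F})$-tree: $\mathbb{R}$-tree with isometric $G$-action where every peripheral subgroup fixes a unique point; minimal: no proper nonempty invariant subtree. $g$ is hyperbolic if it fixes no point. Equivariant Gromov–Hausdorff convergence: for every finite $K\subset T$, finite $P\subset G$, $\epsilon>0$, for all large $n$ there are finite $K_n\subset T_n$ and $R\subseteq K\times K_n$ with surjective projections such that $|d_T(gx,hy)-d_{T_n}(gx',hy')|<\epsilon$ for all $(x,x'),(y,y')\in R$, $g,h\in P$. *)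

theory Defs
  imports "HOL-Analysis.Analysis" "HOL-Algebra.Algebra"
begin

definition fp_factor :: "('g, 'm) monoid_scheme \<Rightarrow> nat \<Rightarrow> (nat \<Rightarrow> 'g set) \<Rightarrow> (nat \<Rightarrow> 'g) \<Rightarrow> nat \<Rightarrow> 'g set"
  where "fp_factor G k Gs xs i = (if i < k then Gs i else generate G {xs (i - k)})"

definition word_prod :: "('g, 'm) monoid_scheme \<Rightarrow> (nat \<times> 'g) list \<Rightarrow> 'g"
  where "word_prod G ws = foldr (\<lambda>p acc. snd p \<otimes>\<^bsub>G\<^esub> acc) ws \<one>\<^bsub>G\<^esub>"

text \<open>Internal free product decomposition: G is generated by the factors, the free
  generators have infinite order (so their cyclic groups are copies of Z, whose
  free product is F_N), and every nonempty reduced alternating word has nontrivial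
  product (normal form theorem).\<close>
definition free_product_decomp ::
  "('g, 'm) monoid_scheme \<Rightarrow> nat \<Rightarrow> (nat \<Rightarrow> 'g set) \<Rightarrow> nat \<Rightarrow> (nat \<Rightarrow> 'g) \<Rightarrow> bool" where
  "free_product_decomp G k Gs N xs \<longleftrightarrow>
     group G \<and>
     (\<forall>i<k. subgroup (Gs i) G) \<and>
     (\<forall>j<N. xs j \<in> carrier G \<and> (\<forall>n::nat. n > 0 \<longrightarrow> xs j [^]\<^bsub>G\<^esub> n \<noteq> \<one>\<^bsub>G\<^esub>)) \<and>
     generate G (\<Union>i<k+N. fp_factor G k Gs xs i) = carrier G \<and>
     (\<forall>ws. ws \<noteq> [] \<longrightarrow>
        (\<forall>p\<in>set ws. fst p < k + N \<and> snd p \<in> fp_factor G k Gs xs (fst p) \<and> snd p \<noteq> \<one>\<^bsub>G\<^esub>) \<longrightarrow>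
        (\<forall>m. Suc m < length ws \<longrightarrow> fst (ws ! m) \<noteq> fst (ws ! Suc m)) \<longrightarrow>
        word_prod G ws \<noteq> \<one>\<^bsub>G\<^esub>)"

definition is_arc :: "'a set \<Rightarrow> ('a \<Rightarrow> 'a \<Rightarrow> real) \<Rightarrow> 'a \<Rightarrow> 'a \<Rightarrow> (real \<Rightarrow> 'a) \<Rightarrow> bool" where
  "is_arc T d x y al \<longleftrightarrow> pathin (Metric_space.mtopology T d) al \<and> inj_on al {0..1} \<and> al 0 = x \<and> al 1 = y"

definition is_geodesic :: "'a set \<Rightarrow> ('a \<Rightarrow> 'a \<Rightarrow> real) \<Rightarrow> 'a \<Rightarrow> 'a \<Rightarrow> (real \<Rightarrow> 'a) \<Rightarrow> bool" where
  "is_geodesic T d x y ga \<longleftrightarrow> ga ` {0..d x y} \<subseteq> T \<and> ga 0 = x \<and> ga (d x y) = y \<and>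
     (\<forall>s\<in>{0..d x y}. \<forall>t\<in>{0..d x y}. d (ga s) (ga t) = \<bar>s - t\<bar>)"

definition R_tree :: "'a set \<Rightarrow> ('a \<Rightarrow> 'a \<Rightarrow> real) \<Rightarrow> bool" where
  "R_tree T d \<longleftrightarrow> T \<noteq> {} \<and> Metric_space T d \<and>
     (\<forall>x\<in>T. \<forall>y\<in>T. \<exists>ga. is_geodesic T d x y ga \<and>
        (\<forall>al. is_arc T d x y al \<longrightarrow> al ` {0..1} = ga ` {0..d x y}))"

text \<open>Segment [a,b] in an R-tree (image of the geodesic from a to b).\<close>
definition seg :: "'a set \<Rightarrow> ('a \<Rightarrow> 'a \<Rightarrow> real) \<Rightarrow> 'a \<Rightarrow> 'a \<Rightarrow> 'a set" where
  "seg T d a b = {z \<in> T. d a z + d z b = d a b}"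

definition subtree :: "'a set \<Rightarrow> ('a \<Rightarrow> 'a \<Rightarrow> real) \<Rightarrow> 'a set \<Rightarrow> bool" where
  "subtree T d Y \<longleftrightarrow> Y \<noteq> {} \<and> Y \<subseteq> T \<and> (\<forall>a\<in>Y. \<forall>b\<in>Y. seg T d a b \<subseteq> Y)"

definition isometric_action ::
  "('g, 'm) monoid_scheme \<Rightarrow> 'a set \<Rightarrow> ('a \<Rightarrow> 'a \<Rightarrow> real) \<Rightarrow> ('g \<Rightarrow> 'a \<Rightarrow> 'a) \<Rightarrow> bool" where
  "isometric_action G T d act \<longleftrightarrow>
     (\<forall>g\<in>carrier G. \<forall>x\<in>T. act g x \<in> T) \<and>
     (\<forall>x\<in>T. act \<one>\<^bsub>G\<^esub> x = x) \<and>
     (\<forall>g\<in>carrier G. \<forall>h\<in>carrier G. \<forall>x\<in>T. act (g \<otimes>\<^bsub>G\<^esub> h) x = act g (act h x)) \<and>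
     (\<forall>g\<in>carrier G. \<forall>x\<in>T. \<forall>y\<in>T. d (act g x) (act g y) = d x y)"

definition GF_tree ::
  "('g, 'm) monoid_scheme \<Rightarrow> nat \<Rightarrow> (nat \<Rightarrow> 'g set) \<Rightarrow> 'a set \<Rightarrow> ('a \<Rightarrow> 'a \<Rightarrow> real) \<Rightarrow> ('g \<Rightarrow> 'a \<Rightarrow> 'a) \<Rightarrow> bool" where
  "GF_tree G k Gs T d act \<longleftrightarrow> R_tree T d \<and> isometric_action G T d act \<and>
     (\<forall>i<k. \<forall>c\<in>carrier G. \<exists>!x. x \<in> T \<and>
        (\<forall>h\<in>Gs i. act (c \<otimes>\<^bsub>G\<^esub> h \<otimes>\<^bsub>G\<^esub> inv\<^bsub>G\<^esub> c) x = x))"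

definition minimal_action ::
  "('g, 'm) monoid_scheme \<Rightarrow> 'a set \<Rightarrow> ('a \<Rightarrow> 'a \<Rightarrow> real) \<Rightarrow> ('g \<Rightarrow> 'a \<Rightarrow> 'a) \<Rightarrow> bool" where
  "minimal_action G T d act \<longleftrightarrow>
     (\<forall>Y. subtree T d Y \<and> (\<forall>g\<in>carrier G. act g ` Y \<subseteq> Y) \<longrightarrow> Y = T)"

definition hyperbolic :: "'a set \<Rightarrow> ('g \<Rightarrow> 'a \<Rightarrow> 'a) \<Rightarrow> 'g \<Rightarrow> bool" where
  "hyperbolic T act g \<longleftrightarrow> (\<forall>x\<in>T. act g x \<noteq> x)"

definition eqGH_converges ::
  "('g, 'm) monoid_scheme \<Rightarrow> (nat \<Rightarrow> 'b set) \<Rightarrow> (nat \<Rightarrow> 'b \<Rightarrow> 'b \<Rightarrow> real) \<Rightarrow> (nat \<Rightarrow> 'g \<Rightarrow> 'b \<Rightarrow> 'b)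
    \<Rightarrow> 'a set \<Rightarrow> ('a \<Rightarrow> 'a \<Rightarrow> real) \<Rightarrow> ('g \<Rightarrow> 'a \<Rightarrow> 'a) \<Rightarrow> bool" where
  "eqGH_converges G Tn dn actn T d act \<longleftrightarrow>
     (\<forall>K P \<epsilon>. finite K \<and> K \<subseteq> T \<and> finite P \<and> P \<subseteq> carrier G \<and> \<epsilon> > 0 \<longrightarrow>
       (\<forall>\<^sub>F n in sequentially. \<exists>Kn R. finite Kn \<and> Kn \<subseteq> Tn n \<and> R \<subseteq> K \<times> Kn \<and>
           fst ` R = K \<and> snd ` R = Kn \<and>
           (\<forall>(x, x')\<in>R. \<forall>(y, y')\<in>R. \<forall>g\<in>P. \<forall>h\<in>P.
              \<bar>d (act g x) (act h y) - dn n (actn n g x') (actn n h y')\<bar> < \<epsilon>)))"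

end

theory Submission
  imports Defs
begin


lemma lip_pathin:
  assumes MS: "Metric_space T d" and L: "L > 0"
    and im: "al ` {0..1} \<subseteq> T"
    and lip: "\<And>s t. s \<in> {0..1} \<Longrightarrow> t \<in> {0..1} \<Longrightarrow> d (al s) (al t) \<le> L * \<bar>s - t\<bar>"
  shows "pathin (Metric_space.mtopology T d) al"
proof -
  interpret M: Metric_space T d by (rule MS)
  show ?thesis
    unfolding pathin_def M.continuous_map_to_metric
  proof (intro ballI allI impI)
    fix x e assume x: "x \<in> topspace (subtopology euclideanreal {0..1})" and e: "(e::real) > 0"
    then have x01: "x \<in> {0..1}" by simp
    let ?U = "{0..1} \<inter> ball x (e / L)"
    have "openin (subtopology euclideanreal {0..1}) ?U"
      by (simp add: openin_subtopology_Int2)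
    moreover have "x \<in> ?U" using x01 e L by simp
    moreover have "\<forall>y\<in>?U. al y \<in> M.mball (al x) e"
    proof
      fix y assume y: "y \<in> ?U"
      then have y01: "y \<in> {0..1}" and "\<bar>x - y\<bar> < e / L" by (auto simp: dist_real_def)
      then have "L * \<bar>x - y\<bar> < e" using L by (simp add: pos_less_divide_eq mult.commute)
      with lip[OF x01 y01] have "d (al x) (al y) < e" by linarith
      then show "al y \<in> M.mball (al x) e" using im x01 y01 by auto
    qed
    ultimately show "\<exists>U. openin (subtopology euclideanreal {0..1}) U \<and> x \<in> U \<and> (\<forall>y\<in>U. al y \<in> M.mball (al x) e)"
      by blast
  qed
qed



lemma RT_metric: "R_tree T d \<Longrightarrow> Metric_space T d" by (simp add: R_tree_def)

lemma geo_dist: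
  assumes "is_geodesic T d x y ga" "s \<in> {0..d x y}"
  shows "d x (ga s) = s" "d (ga s) y = d x y - s" "ga s \<in> T"
proof -
  have D: "0 \<le> d x y" using assms(2) by auto
  have g: "ga 0 = x" "ga (d x y) = y" "\<forall>s\<in>{0..d x y}. \<forall>t\<in>{0..d x y}. d (ga s) (ga t) = \<bar>s - t\<bar>"
    using assms(1) unfolding is_geodesic_def by auto
  have "d (ga 0) (ga s) = \<bar>0 - s\<bar>" "d (ga s) (ga (d x y)) = \<bar>s - d x y\<bar>"
    using g(3) assms(2) D by auto
  then show "d x (ga s) = s" "d (ga s) y = d x y - s" using assms(2) unfolding g(1,2) by auto
  show "ga s \<in> T" using assms unfolding is_geodesic_def by auto
qed

lemma geo_seg:
  assumes "is_geodesic T d x y ga"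
  shows "ga ` {0..d x y} \<subseteq> seg T d x y"
  using geo_dist[OF assms] unfolding seg_def by auto

lemma arc_image:
  assumes RT: "R_tree T d" and Lp: "\<Lambda> > 0" and im: "c ` {0..\<Lambda>} \<subseteq> T"
    and inj: "inj_on c {0..\<Lambda>}"
    and lip: "\<And>s t. s\<in>{0..\<Lambda>} \<Longrightarrow> t\<in>{0..\<Lambda>} \<Longrightarrow> d (c s) (c t) \<le> \<bar>s - t\<bar>"
    and uniq: "\<forall>al. is_arc T d (c 0) (c \<Lambda>) al \<longrightarrow> al ` {0..1} = ga ` {0..d (c 0) (c \<Lambda>)}"
  shows "c ` {0..\<Lambda>} = ga ` {0..d (c 0) (c \<Lambda>)}"
proof -
  define al where "al = (\<lambda>s. c (\<Lambda> * s))"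
  have sc: "(\<lambda>s. \<Lambda> * s) ` {0..1} = {0..\<Lambda>}"
  proof
    show "(\<lambda>s. \<Lambda> * s) ` {0..1} \<subseteq> {0..\<Lambda>}" using Lp by (auto simp: mult_le_cancel_left1)
    show "{0..\<Lambda>} \<subseteq> (\<lambda>s. \<Lambda> * s) ` {0..1}"
    proof
      fix t assume t: "t \<in> {0..\<Lambda>}"
      then have "t = \<Lambda> * (t / \<Lambda>)" "t / \<Lambda> \<in> {0..1}" using Lp by auto
      then show "t \<in> (\<lambda>s. \<Lambda> * s) ` {0..1}" by blast
    qed
  qed
  have scm: "\<And>s. s \<in> {0..1} \<Longrightarrow> \<Lambda> * s \<in> {0..\<Lambda>}" using Lp by (auto simp: mult_le_cancel_left1)
  have alim: "al ` {0..1} = c ` {0..\<Lambda>}" 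
  proof -
    have "al ` {0..1} = c ` ((\<lambda>s. \<Lambda> * s) ` {0..1})" by (auto simp: al_def)
    then show ?thesis using sc by simp
  qed
  have "is_arc T d (c 0) (c \<Lambda>) al"
    unfolding is_arc_def
  proof (intro conjI)
    show "pathin (Metric_space.mtopology T d) al"
    proof (rule lip_pathin[OF RT_metric[OF RT] Lp])
      show "al ` {0..1} \<subseteq> T" using alim im by simp
      fix s t :: real assume "s \<in> {0..1}" "t \<in> {0..1}"
      then have "\<Lambda> * s \<in> {0..\<Lambda>}" "\<Lambda> * t \<in> {0..\<Lambda>}" using scm by auto
      from lip[OF this] show "d (al s) (al t) \<le> \<Lambda> * \<bar>s - t\<bar>"
        using Lp by (simp add: al_def abs_mult flip: right_diff_distrib)
    qed
    show "inj_on al {0..1}"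
    proof (rule inj_onI)
      fix s t assume st: "s \<in> {0..1}" "t \<in> {0..1}" "al s = al t"
      then have "\<Lambda> * s \<in> {0..\<Lambda>}" "\<Lambda> * t \<in> {0..\<Lambda>}" using scm by auto
      with st(3) inj have "\<Lambda> * s = \<Lambda> * t" unfolding al_def by (meson inj_onD)
      then show "s = t" using Lp by simp
    qed
  qed (auto simp: al_def)
  with uniq alim show ?thesis by simp
qed



lemma RT_geo:
  assumes "R_tree T d" "x \<in> T" "y \<in> T"
  obtains ga where "is_geodesic T d x y ga" "\<forall>al. is_arc T d x y al \<longrightarrow> al ` {0..1} = ga ` {0..d x y}"
  using assms unfolding R_tree_def by blast

lemma RT_geo1:
  assumes "R_tree T d" "x \<in> T" "y \<in> T"
  shows "\<exists>ga. is_geodesic T d x y ga"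
  using assms unfolding R_tree_def by blast

lemma seg_sub:
  assumes RT: "R_tree T d" and x: "x \<in> T" and y: "y \<in> T"
    and G: "is_geodesic T d x y ga"
    and U: "\<forall>al. is_arc T d x y al \<longrightarrow> al ` {0..1} = ga ` {0..d x y}"
    and z: "z \<in> seg T d x y"
  shows "z \<in> ga ` {0..d x y}"
proof -
  interpret M: Metric_space T d by (rule RT_metric[OF RT])
  have zT: "z \<in> T" and zs: "d x z + d z y = d x y" using z unfolding seg_def by auto
  show ?thesis
  proof (cases "d x y = 0")
    case True
    then have "d x z = 0" using zs M.nonneg[of x z] M.nonneg[of z y] by linarith
    then have "z = x" using x zT by simp
    moreover have "ga 0 = x" using G unfolding is_geodesic_def by auto
    ultimately show ?thesis using True by force
  next
    case False
    define D where "D = d x y"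
    have Dp: "D > 0" using False M.nonneg[of x y] unfolding D_def by linarith
    obtain g1 where g1: "is_geodesic T d x z g1" using RT_geo1[OF RT x zT] by (elim exE)
    obtain g2 where g2: "is_geodesic T d z y g2" using RT_geo1[OF RT zT y] by (elim exE)
    define p where "p = d x z"
    define q where "q = d z y"
    have pq: "p \<ge> 0" "q \<ge> 0" "p + q = D" using zs unfolding p_def q_def D_def by auto
    define c where "c = (\<lambda>s. if s \<le> p then g1 s else g2 (s - p))"
    have g1i: "\<And>s t. s \<in> {0..p} \<Longrightarrow> t \<in> {0..p} \<Longrightarrow> d (g1 s) (g1 t) = \<bar>s - t\<bar>"
      using g1 unfolding is_geodesic_def p_def by auto
    have g2i: "\<And>s t. s \<in> {0..q} \<Longrightarrow> t \<in> {0..q} \<Longrightarrow> d (g2 s) (g2 t) = \<bar>s - t\<bar>"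
      using g2 unfolding is_geodesic_def q_def by auto
    have cT: "\<And>s. s \<in> {0..D} \<Longrightarrow> c s \<in> T"
      using geo_dist(3)[OF g1] geo_dist(3)[OF g2] pq unfolding c_def p_def q_def by auto
    have iso1: "d (c s) (c t) = t - s" if st: "s \<in> {0..D}" "t \<in> {0..D}" "s \<le> t" for s t
    proof (cases "t \<le> p")
      case True then show ?thesis using st g1i[of s t] unfolding c_def by auto
    next
      case tp: False
      show ?thesis
      proof (cases "s \<le> p")
        case False then show ?thesis using st tp g2i[of "s - p" "t - p"] pq unfolding c_def by auto
      next
        case sp: True
        have cs: "c s = g1 s" "c t = g2 (t - p)" using sp tp unfolding c_def by auto
        have s0: "s \<in> {0..d x z}" using st sp by (auto simp: p_def)
        have t0: "t - p \<in> {0..d z y}" using st tp pq by (auto simp: q_def)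
        have a1: "d x (g1 s) = s" "d (g1 s) z = p - s" using geo_dist[OF g1 s0] by (auto simp: p_def)
        have a2: "d z (g2 (t - p)) = t - p" "d (g2 (t-p)) y = q - (t - p)" using geo_dist[OF g2 t0] by (auto simp: q_def)
        have T1: "g1 s \<in> T" "g2 (t - p) \<in> T" using geo_dist(3)[OF g1 s0] geo_dist(3)[OF g2 t0] by auto
        have "d (g1 s) (g2 (t-p)) \<le> d (g1 s) z + d z (g2 (t-p))" using M.triangle T1 zT by blast
        moreover have "d x y \<le> d x (g1 s) + d (g1 s) (g2 (t-p)) + d (g2 (t-p)) y"
          using M.triangle[of x "g1 s" y] M.triangle[of "g1 s" "g2 (t-p)" y] T1 x y by linarith
        ultimately have "d (g1 s) (g2 (t-p)) = t - s" using a1 a2 pq unfolding D_def by linarith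
        then show ?thesis using cs by simp
      qed
    qed
    have iso: "d (c s) (c t) = \<bar>s - t\<bar>" if st: "s \<in> {0..D}" "t \<in> {0..D}" for s t
    proof (cases "s \<le> t")
      case True then show ?thesis using iso1[OF st True] by simp
    next
      case False then show ?thesis using iso1[OF st(2,1)] M.commute[of "c s" "c t"] by simp
    qed
    have c0: "c 0 = x" using pq g1 unfolding c_def is_geodesic_def by auto
    have cD: "c D = y"
    proof (cases "D \<le> p")
      case True
      then have "q = 0" "p = D" using pq by auto
      then have "z = y" using zT y unfolding q_def by simp
      moreover have "g1 p = z" using g1 unfolding is_geodesic_def p_def by auto
      ultimately show ?thesis using True \<open>p = D\<close> unfolding c_def by simp
    next
      case False
      then show ?thesis using pq g2 unfolding c_def is_geodesic_def q_def by auto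
    qed
    have inj: "inj_on c {0..D}"
    proof (rule inj_onI)
      fix s t assume st: "s \<in> {0..D}" "t \<in> {0..D}" "c s = c t"
      have "d (c s) (c t) = 0" using st(3) cT[OF st(1)] by simp
      then show "s = t" using iso[OF st(1,2)] by simp
    qed
    have cim: "c ` {0..D} \<subseteq> T" using cT by blast
    have U': "\<forall>al. is_arc T d (c 0) (c D) al \<longrightarrow> al ` {0..1} = ga ` {0..d (c 0) (c D)}"
      unfolding c0 cD by (rule U)
    have lipc: "\<And>s t. s\<in>{0..D} \<Longrightarrow> t\<in>{0..D} \<Longrightarrow> d (c s) (c t) \<le> \<bar>s - t\<bar>"
      using iso by simp
    have E: "c ` {0..D} = ga ` {0..d (c 0) (c D)}"
      by (rule arc_image[OF RT Dp cim inj lipc U'])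
    have "c p = z"
      using g1 unfolding c_def is_geodesic_def p_def by auto
    moreover have "p \<in> {0..D}" using pq by auto
    ultimately have "z \<in> c ` {0..D}" by blast
    moreover have "c ` {0..D} = ga ` {0..d x y}" using E by (simp only: c0 cD)
    ultimately show ?thesis by simp
  qed
qed

lemma seg_order:
  assumes RT: "R_tree T d" and ob: "ob \<in> T" and z: "z \<in> T"
    and p: "p \<in> seg T d ob z" and q: "q \<in> seg T d ob z" and le: "d ob p \<le> d ob q"
  shows "p \<in> seg T d ob q"
proof -
  obtain ga where G: "is_geodesic T d ob z ga" and U: "\<forall>al. is_arc T d ob z al \<longrightarrow> al ` {0..1} = ga ` {0..d ob z}"
    using RT_geo[OF RT ob z] by blast
  obtain s where s: "s \<in> {0..d ob z}" "p = ga s" using seg_sub[OF RT ob z G U p] by blast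
  obtain t where t: "t \<in> {0..d ob z}" "q = ga t" using seg_sub[OF RT ob z G U q] by blast
  have ds: "d ob p = s" "d ob q = t" using geo_dist(1)[OF G] s t by auto
  have "d p q = \<bar>s - t\<bar>" using G s t unfolding is_geodesic_def by auto
  then show ?thesis using ds le p unfolding seg_def by auto
qed



lemma tripod:
  assumes RT: "R_tree T d" and x: "x \<in> T" and y: "y \<in> T" and z: "z \<in> T"
  shows "\<exists>w. w \<in> seg T d x y \<and> w \<in> seg T d x z \<and> w \<in> seg T d y z"
proof -
  interpret M: Metric_space T d by (rule RT_metric[OF RT])
  obtain ga where G: "is_geodesic T d x y ga" using RT_geo1[OF RT x y] by (elim exE)
  define a where "a = d x y"
  have a0: "a \<ge> 0" unfolding a_def by simp
  have gT: "\<And>t. t \<in> {0..a} \<Longrightarrow> ga t \<in> T" using geo_dist(3)[OF G] unfolding a_def by blast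
  have gx: "\<And>t. t \<in> {0..a} \<Longrightarrow> d x (ga t) = t" using geo_dist(1)[OF G] unfolding a_def by blast
  have gy: "\<And>t. t \<in> {0..a} \<Longrightarrow> d (ga t) y = a - t" using geo_dist(2)[OF G] unfolding a_def by blast
  have gi: "\<And>s t. s \<in> {0..a} \<Longrightarrow> t \<in> {0..a} \<Longrightarrow> d (ga s) (ga t) = \<bar>s - t\<bar>"
    using G unfolding is_geodesic_def a_def by blast
  define psi where "psi = (\<lambda>t. t + d (ga t) z)"
  have psige: "\<And>t. t \<in> {0..a} \<Longrightarrow> d x z \<le> psi t"
    using M.triangle[of x _ z] gT gx x z unfolding psi_def by fastforce
  have psilip: "psi s \<le> psi t + 2 * \<bar>s - t\<bar>" if "s \<in> {0..a}" "t \<in> {0..a}" for s t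
  proof -
    have "d (ga s) z \<le> d (ga s) (ga t) + d (ga t) z" using M.triangle gT that z by blast
    then show ?thesis using gi[OF that] abs_ge_self[of "s - t"] unfolding psi_def by (smt (verit))
  qed
  define Z where "Z = {t \<in> {0..a}. psi t \<le> d x z}"
  define t0 where "t0 = Sup Z"
  have Z0: "0 \<in> Z" unfolding Z_def psi_def using a0 G unfolding is_geodesic_def by auto
  have Zne: "Z \<noteq> {}" using Z0 by blast
  have Zbdd: "bdd_above Z" unfolding Z_def by (rule bdd_aboveI[of _ a]) auto
  have t0ge: "0 \<le> t0" unfolding t0_def using Z0 Zbdd by (rule cSup_upper)
  have t0le: "t0 \<le> a" unfolding t0_def using Zne by (rule cSup_least) (auto simp: Z_def)
  have t0I: "t0 \<in> {0..a}" using t0ge t0le by simp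
  have Zle: "\<And>t. t \<in> Z \<Longrightarrow> t \<le> t0" unfolding t0_def using Zbdd by (simp add: cSup_upper)
  have psit0: "psi t0 \<le> d x z"
  proof (rule field_le_epsilon)
    fix e :: real assume e: "0 < e"
    have "t0 - e / 2 < Sup Z" using e unfolding t0_def by simp
    then obtain t where t: "t \<in> Z" "t0 - e / 2 < t" using less_cSup_iff[OF Zne Zbdd] by blast
    have tI: "t \<in> {0..a}" and pt: "psi t \<le> d x z" using t unfolding Z_def by auto
    have "t \<le> t0" using Zle t by blast
    have "psi t0 \<le> psi t + 2 * \<bar>t0 - t\<bar>" by (rule psilip[OF t0I tI])
    then show "psi t0 \<le> d x z + e" using pt t \<open>t \<le> t0\<close> by simp
  qed
  have t0Z: "t0 \<in> Z" unfolding Z_def using t0I psit0 by simp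
  define w where "w = ga t0"
  have wT: "w \<in> T" unfolding w_def by (rule gT[OF t0I])
  have dxw: "d x w = t0" unfolding w_def by (rule gx[OF t0I])
  have dwy: "d w y = a - t0" unfolding w_def by (rule gy[OF t0I])
  have psieq: "psi t0 = d x z" using psit0 psige[OF t0I] by simp
  have s1: "w \<in> seg T d x y" unfolding seg_def a_def[symmetric] using wT dxw dwy by simp
  have s2: "w \<in> seg T d x z" unfolding seg_def using wT dxw psieq unfolding psi_def w_def by simp
  define b where "b = d w z"
  define A where "A = a - t0"
  have A0: "A \<ge> 0" "b \<ge> 0" using t0le unfolding A_def b_def by auto
  have s3: "w \<in> seg T d y z"
  proof (cases "A + b = 0")
    case True
    then have "A = 0" "b = 0" using A0 by auto
    then have "w = y" "w = z" using wT y z dwy unfolding A_def b_def by auto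
    then show ?thesis unfolding seg_def using y by simp
  next
    case False
    define L where "L = A + b"
    have Lp: "L > 0" using False A0 unfolding L_def by simp
    obtain tau where TAU: "is_geodesic T d w z tau" using RT_geo1[OF RT wT z] by (elim exE)
    obtain gyz where GYZ: "is_geodesic T d y z gyz"
      and UYZ: "\<forall>al. is_arc T d y z al \<longrightarrow> al ` {0..1} = gyz ` {0..d y z}"
      using RT_geo[OF RT y z] by blast
    have tT: "\<And>u. u \<in> {0..b} \<Longrightarrow> tau u \<in> T" using geo_dist(3)[OF TAU] unfolding b_def by blast
    have tw: "\<And>u. u \<in> {0..b} \<Longrightarrow> d w (tau u) = u" using geo_dist(1)[OF TAU] unfolding b_def by blast
    have tz: "\<And>u. u \<in> {0..b} \<Longrightarrow> d (tau u) z = b - u" using geo_dist(2)[OF TAU] unfolding b_def by blast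
    have ti: "\<And>s t. s \<in> {0..b} \<Longrightarrow> t \<in> {0..b} \<Longrightarrow> d (tau s) (tau t) = \<bar>s - t\<bar>"
      using TAU unfolding is_geodesic_def b_def by blast
    define c where "c = (\<lambda>s. if s \<le> A then ga (a - s) else tau (s - A))"
    have cT: "c s \<in> T" if "s \<in> {0..L}" for s
    proof (cases "s \<le> A")
      case True then show ?thesis using that gT[of "a - s"] A0 t0ge unfolding c_def A_def by auto
    next
      case False then show ?thesis using that tT[of "s - A"] unfolding c_def L_def by auto
    qed
    have mixlip: "d (c s) (c t) \<le> t - s" if "s \<in> {0..L}" "t \<in> {0..L}" "s \<le> A" "A < t" for s t
    proof -
      have sI: "a - s \<in> {0..a}" using that t0ge unfolding A_def by auto
      have uI: "t - A \<in> {0..b}" using that unfolding L_def by auto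
      have cs: "c s = ga (a - s)" "c t = tau (t - A)" using that unfolding c_def by auto
      have "d (ga (a - s)) (tau (t - A)) \<le> d (ga (a - s)) w + d w (tau (t - A))"
        using M.triangle gT[OF sI] wT tT[OF uI] by blast
      moreover have "d (ga (a - s)) w = \<bar>(a - s) - t0\<bar>" unfolding w_def by (rule gi[OF sI t0I])
      ultimately show ?thesis using cs tw[OF uI] that unfolding A_def by simp
    qed
    have lip1: "d (c s) (c t) \<le> t - s" if st: "s \<in> {0..L}" "t \<in> {0..L}" "s \<le> t" for s t
    proof (cases "t \<le> A")
      case True
      then have "a - s \<in> {0..a}" "a - t \<in> {0..a}" using st t0ge unfolding A_def by auto
      then show ?thesis using gi[of "a - s" "a - t"] True st unfolding c_def by simp
    next
      case tA: False
      show ?thesis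
      proof (cases "s \<le> A")
        case True then show ?thesis using mixlip[OF st(1,2) True] tA by simp
      next
        case False
        then have "s - A \<in> {0..b}" "t - A \<in> {0..b}" using st tA unfolding L_def by auto
        then show ?thesis using ti[of "s - A" "t - A"] False tA st unfolding c_def by simp
      qed
    qed
    have lip: "d (c s) (c t) \<le> \<bar>s - t\<bar>" if st: "s \<in> {0..L}" "t \<in> {0..L}" for s t
    proof (cases "s \<le> t")
      case True then show ?thesis using lip1[OF st True] by simp
    next
      case False then show ?thesis using lip1[OF st(2,1)] M.commute[of "c s" "c t"] by simp
    qed
    have mixne: "c s \<noteq> c t" if "s \<in> {0..L}" "t \<in> {0..L}" "s \<le> A" "A < t" for s t
    proof
      assume eq: "c s = c t"
      define sg where "sg = a - s"
      define u where "u = t - A"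
      have sI: "sg \<in> {0..a}" using that t0ge unfolding A_def sg_def by auto
      have sg0: "t0 \<le> sg" using that unfolding A_def sg_def by auto
      have uI: "u \<in> {0..b}" "u > 0" using that unfolding L_def u_def by auto
      have e2: "ga sg = tau u" using eq that unfolding c_def sg_def u_def by simp
      have "sg = d x (tau u)" using gx[OF sI] e2 by simp
      also have "\<dots> \<le> d x w + d w (tau u)" using M.triangle x wT tT[OF uI(1)] by blast
      finally have "sg \<le> t0 + u" using dxw tw[OF uI(1)] by simp
      then have "psi sg \<le> d x z"
        using psieq tz[OF uI(1)] e2 unfolding psi_def w_def b_def by simp
      then have "sg \<in> Z" unfolding Z_def using sI by simp
      then have "sg = t0" using Zle sg0 by force
      then have "d w (tau u) = 0" using e2 wT unfolding w_def by simp
      then show False using tw[OF uI(1)] uI(2) by simp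
    qed
    have inj: "inj_on c {0..L}"
    proof (rule inj_onI)
      fix s t assume st: "s \<in> {0..L}" "t \<in> {0..L}" "c s = c t"
      have d0: "d (c s) (c t) = 0" using st(3) cT[OF st(1)] by simp
      show "s = t"
      proof (cases "s \<le> A")
        case sA: True
        show ?thesis
        proof (cases "t \<le> A")
          case tA: True
          have I: "a - s \<in> {0..a}" "a - t \<in> {0..a}" using st sA tA t0ge unfolding A_def by auto
          have "d (c s) (c t) = d (ga (a - s)) (ga (a - t))" using sA tA unfolding c_def by simp
          then have "\<bar>(a - s) - (a - t)\<bar> = 0" using d0 gi[OF I] by simp
          then show ?thesis by simp
        next
          case False
          then show ?thesis using mixne[OF st(1,2) sA] st(3) by simp
        qed
      next
        case sA: False
        show ?thesis
        proof (cases "t \<le> A")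
          case tA: True
          then show ?thesis using mixne[OF st(2,1) tA] st(3) sA by simp
        next
          case tA: False
          have I: "s - A \<in> {0..b}" "t - A \<in> {0..b}" using st sA tA unfolding L_def by auto
          have "d (c s) (c t) = d (tau (s - A)) (tau (t - A))" using sA tA unfolding c_def by simp
          then have "\<bar>(s - A) - (t - A)\<bar> = 0" using d0 ti[OF I] by simp
          then show ?thesis by simp
        qed
      qed
    qed
    have c0: "c 0 = y"
    proof -
      have "a \<in> {0..a}" using a0 by simp
      then have "d (ga a) y = 0" using gy by simp
      then show ?thesis unfolding c_def using A0 gT[of a] a0 y by simp
    qed
    have cL: "c L = z"
    proof (cases "L \<le> A")
      case True
      then have "b = 0" "L = A" using A0 unfolding L_def by auto
      then have "w = z" using wT z unfolding b_def by simp
      then show ?thesis using True \<open>L = A\<close> unfolding c_def A_def w_def by simp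
    next
      case False
      then have "L - A = b" unfolding L_def by simp
      then show ?thesis using False TAU unfolding c_def is_geodesic_def b_def by simp
    qed
    have cim: "c ` {0..L} \<subseteq> T" using cT by blast
    have U': "\<forall>al. is_arc T d (c 0) (c L) al \<longrightarrow> al ` {0..1} = gyz ` {0..d (c 0) (c L)}"
      unfolding c0 cL by (rule UYZ)
    have E: "c ` {0..L} = gyz ` {0..d (c 0) (c L)}"
      by (rule arc_image[OF RT Lp cim inj lip U'])
    have "c A = w" unfolding c_def A_def w_def by simp
    moreover have "A \<in> {0..L}" using A0 unfolding L_def by simp
    ultimately have "w \<in> c ` {0..L}" by blast
    moreover have "c ` {0..L} = gyz ` {0..d y z}" using E by (simp only: c0 cL)
    ultimately show ?thesis using geo_seg[OF GYZ] by blast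
  qed
  show ?thesis using s1 s2 s3 by blast
qed



lemma seg_trans:
  assumes MS: "Metric_space T d" and p: "p \<in> seg T d ob q" and q: "q \<in> seg T d ob y"
    and ob: "ob \<in> T" and y: "y \<in> T"
  shows "p \<in> seg T d ob y"
proof -
  interpret M: Metric_space T d by (rule MS)
  have pT: "p \<in> T" and qT: "q \<in> T" using p q unfolding seg_def by auto
  have "d p y \<le> d p q + d q y" using M.triangle pT qT y by blast
  moreover have "d ob y \<le> d ob p + d p y" using M.triangle pT ob y by blast
  moreover have "d ob p + d p q = d ob q" "d ob q + d q y = d ob y" using p q unfolding seg_def by auto
  ultimately have "d ob p + d p y = d ob y" by linarith
  then show ?thesis using pT unfolding seg_def by simp
qed

lemma seg_eqs: "w \<in> seg T d x y \<Longrightarrow> d x w + d w y = d x y \<and> w \<in> T"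
  unfolding seg_def by auto

lemma four_point:
  assumes RT: "R_tree T d" and ob: "ob \<in> T" and x: "x \<in> T" and y: "y \<in> T" and z: "z \<in> T"
  shows "d ob x + d ob y - d x y \<ge> min (d ob x + d ob z - d x z) (d ob z + d ob y - d z y)"
proof -
  interpret M: Metric_space T d by (rule RT_metric[OF RT])
  obtain c1 where c1: "c1 \<in> seg T d ob x" "c1 \<in> seg T d ob z" "c1 \<in> seg T d x z"
    using tripod[OF RT ob x z] by blast
  obtain c2 where c2: "c2 \<in> seg T d ob y" "c2 \<in> seg T d ob z" "c2 \<in> seg T d y z"
    using tripod[OF RT ob y z] by blast
  have e1: "d ob c1 + d c1 x = d ob x" "d ob c1 + d c1 z = d ob z" "d x c1 + d c1 z = d x z" "c1 \<in> T"
    using seg_eqs[OF c1(1)] seg_eqs[OF c1(2)] seg_eqs[OF c1(3)] by auto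
  have e2: "d ob c2 + d c2 y = d ob y" "d ob c2 + d c2 z = d ob z" "d y c2 + d c2 z = d y z" "c2 \<in> T"
    using seg_eqs[OF c2(1)] seg_eqs[OF c2(2)] seg_eqs[OF c2(3)] by auto
  have cm: "d x c1 = d c1 x" "d y c2 = d c2 y" "d z y = d y z" by (rule M.commute)+
  show ?thesis
  proof (cases "d ob c1 \<le> d ob c2")
    case True
    have "c1 \<in> seg T d ob c2" by (rule seg_order[OF RT ob z c1(2) c2(2) True])
    then have "c1 \<in> seg T d ob y" by (rule seg_trans[OF RT_metric[OF RT] _ c2(1) ob y])
    then have "d ob c1 + d c1 y = d ob y" by (simp add: seg_def)
    moreover have "d x y \<le> d x c1 + d c1 y" using M.triangle x y e1(4) by blast
    ultimately show ?thesis using e1 e2 cm by linarith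
  next
    case False
    then have F: "d ob c2 \<le> d ob c1" by simp
    have "c2 \<in> seg T d ob c1" by (rule seg_order[OF RT ob z c2(2) c1(2) F])
    then have "c2 \<in> seg T d ob x" by (rule seg_trans[OF RT_metric[OF RT] _ c1(1) ob x])
    then have "d ob c2 + d c2 x = d ob x" by (simp add: seg_def)
    moreover have "d x y \<le> d x c2 + d c2 y" using M.triangle x y e2(4) by blast
    moreover have "d x c2 = d c2 x" by (rule M.commute)
    ultimately show ?thesis using e1 e2 cm by linarith
  qed
qed



lemma min_ge_trans: "min A B \<le> C \<Longrightarrow> K \<le> A \<Longrightarrow> K \<le> B \<Longrightarrow> K \<le> (C::real)"
  by (auto simp: min_def split: if_splits)

lemma hyp_mono:
  assumes RT: "R_tree TT dt" and fX: "\<And>x. x \<in> TT \<Longrightarrow> h x \<in> TT"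
    and fiso: "\<And>x y. x \<in> TT \<Longrightarrow> y \<in> TT \<Longrightarrow> dt (h x) (h y) = dt x y"
    and nofix: "\<And>x. x \<in> TT \<Longrightarrow> h x \<noteq> x" and z: "z \<in> TT" and n: "n \<ge> 1"
  shows "dt z (h z) \<le> dt z ((h ^^ n) z)"
proof -
  interpret M: Metric_space TT dt by (rule RT_metric[OF RT])
  define a where "a = (\<lambda>j. (h ^^ j) z)"
  have aT: "a j \<in> TT" for j by (induction j) (auto simp: a_def z fX)
  have aS: "a (Suc j) = h (a j)" for j by (simp add: a_def)
  have a0: "a 0 = z" by (simp add: a_def)
  define F where "F = (\<lambda>k. dt z (a k))"
  have adist0: "dt (a i) (a (i + k)) = F k" for i k
  proof (induction i)
    case 0 then show ?case by (simp add: F_def a0)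
  next
    case (Suc i)
    have "dt (a (Suc i)) (a (Suc i + k)) = dt (h (a i)) (h (a (i + k)))" by (simp add: aS)
    also have "\<dots> = dt (a i) (a (i + k))" by (rule fiso[OF aT aT])
    finally show ?case using Suc by simp
  qed
  have adist: "dt (a i) (a j) = F (j - i)" if "i \<le> j" for i j
    using adist0[of i "j - i"] that by simp
  have cm: "\<And>u v. dt u v = dt v u" by (rule M.commute)
  define L where "L = F 1"
  have step1: "F 1 < F 2"
  proof (rule ccontr)
    assume "\<not> F 1 < F 2"
    then have F2: "F 2 \<le> L" unfolding L_def by simp
    obtain ga where G: "is_geodesic TT dt z (a 1) ga" using RT_geo1[OF RT z aT[of 1]] by (elim exE)
    have Ld: "dt z (a 1) = L" unfolding L_def F_def by simp
    have L0: "L \<ge> 0" using Ld[symmetric] by simp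
    have hI: "L / 2 \<in> {0..dt z (a 1)}" using Ld L0 by simp
    define m where "m = ga (L / 2)"
    have mT: "m \<in> TT" unfolding m_def by (rule geo_dist(3)[OF G hI])
    have zm: "dt z m = L / 2" unfolding m_def using geo_dist(1)[OF G hI] by simp
    have ma1: "dt m (a 1) = L / 2" unfolding m_def using geo_dist(2)[OF G hI] Ld by simp
    define fm where "fm = h m"
    have fmT: "fm \<in> TT" unfolding fm_def by (rule fX[OF mT])
    have a1: "a 1 = h z" using aS[of 0] a0 by simp
    have a2: "a 2 = h (a 1)" using aS[of 1] by (simp add: numeral_2_eq_2)
    have d1: "dt (a 1) fm = L / 2" unfolding a1 fm_def using fiso[OF z mT] zm by simp
    have d2: "dt fm (a 2) = L / 2" unfolding a2 fm_def using fiso[OF mT aT] ma1 by simp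
    have d3: "dt (a 0) (a 2) = F 2" using adist[of 0 2] by simp
    have d4: "dt (a 1) (a 2) = L" using adist[of 1 2] unfolding L_def by simp
    have d5: "dt (a 1) (a 0) = L" using adist[of 0 1] cm unfolding L_def by simp
    note FP1 = four_point[OF RT aT[of 1] mT fmT aT[of 0]]
    note FP2 = four_point[OF RT aT[of 1] aT[of 0] fmT aT[of 2]]
    have e1: "dt (a 1) m = L / 2" "dt m (a 0) = L / 2" "dt (a 2) fm = L / 2"
      using ma1 zm d2 cm a0 by (metis)+
    have "L \<le> dt (a 1) (a 0) + dt (a 1) fm - dt (a 0) fm"
      by (rule min_ge_trans[OF FP2]) (use d3 d4 d5 d1 e1 F2 in simp)+
    then have "L \<le> dt (a 1) m + dt (a 1) fm - dt m fm"
      by (intro min_ge_trans[OF FP1]) (use d5 d1 e1 in simp)+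
    then have "dt m fm \<le> 0" using e1 d1 by simp
    then have "dt m fm = 0" using M.nonneg[of m fm] by linarith
    then have "m = fm" using mT fmT by simp
    then show False using nofix[OF mT] unfolding fm_def by simp
  qed
  define l where "l = F 2 - F 1"
  have lp: "l > 0" using step1 unfolding l_def by simp
  have claim: "F (n + 2) - F (n + 1) \<ge> l \<and> F (n + 1) \<ge> F 1 + real n * l" for n
  proof (induction n)
    case 0 then show ?case unfolding l_def by (simp add: numeral_2_eq_2)
  next
    case (Suc n)
    have IH1: "F (n + 2) - F (n + 1) \<ge> l" and IH2: "F (n + 1) \<ge> F 1 + real n * l" using Suc by auto
    have B: "F (n + 2) \<ge> F 1 + real (Suc n) * l" using IH1 IH2 by (simp add: algebra_simps)
    have nl: "real (Suc n) * l > 0" using lp by simp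
    note FP = four_point[OF RT aT[of 0] aT[of 1] aT[of "n + 3"] aT[of "n + 2"]]
    have v1: "dt (a 0) (a 1) = F 1" using adist[of 0 1] by simp
    have v2: "dt (a 0) (a (n + 3)) = F (n + 3)" using adist[of 0 "n + 3"] by simp
    have v3: "dt (a 1) (a (n + 3)) = F (n + 2)" using adist[of 1 "n + 3"] by simp
    have v4: "dt (a 0) (a (n + 2)) = F (n + 2)" using adist[of 0 "n + 2"] by simp
    have v5: "dt (a 1) (a (n + 2)) = F (n + 1)" using adist[of 1 "n + 2"] by simp
    have v6: "dt (a (n + 2)) (a (n + 3)) = F 1" using adist[of "n + 2" "n + 3"] by simp
    have FP': "F 1 + F (n + 3) - F (n + 2) \<ge> min (F 1 + F (n + 2) - F (n + 1)) (F (n + 2) + F (n + 3) - F 1)"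
      using FP unfolding v1 v2 v3 v4 v5 v6 .
    then have "F 1 + F (n + 2) - F (n + 1) \<le> F 1 + F (n + 3) - F (n + 2) \<or>
               F (n + 2) + F (n + 3) - F 1 \<le> F 1 + F (n + 3) - F (n + 2)"
      by (simp add: min_le_iff_disj)
    then have X: "F (n + 3) - F (n + 2) \<ge> l" using IH1 B nl by auto
    have E: "Suc n + 2 = n + 3" "Suc n + 1 = n + 2" by simp_all
    show ?case unfolding E using X B by (intro conjI) linarith+
  qed
  obtain m where m: "n = m + 1" using n by (metis le_add_diff_inverse2)
  have "F (m + 1) \<ge> F 1 + real m * l" using claim[of m] by simp
  moreover have "real m * l \<ge> 0" using lp by simp
  ultimately have "F n \<ge> F 1" using m by simp
  then show ?thesis unfolding F_def a_def by simp
qed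



lemma pow_act:
  assumes grp: "group G" and IA: "isometric_action G T d act" and g: "g \<in> carrier G"
  shows "x \<in> T \<Longrightarrow> act (g [^]\<^bsub>G\<^esub> (k::nat)) x = (act g ^^ k) x"
proof (induction k arbitrary: x)
  case 0 then show ?case using IA unfolding isometric_action_def by simp
next
  case (Suc k)
  have gk: "g [^]\<^bsub>G\<^esub> k \<in> carrier G" using monoid.nat_pow_closed[OF group.is_monoid[OF grp] g] by blast
  have gx: "act g x \<in> T" using IA g Suc.prems unfolding isometric_action_def by blast
  have "act (g [^]\<^bsub>G\<^esub> Suc k) x = act (g [^]\<^bsub>G\<^esub> k) (act g x)"
    using IA gk g Suc.prems unfolding isometric_action_def by simp
  also have "\<dots> = (act g ^^ k) (act g x)" using Suc.IH[OF gx] .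
  also have "\<dots> = (act g ^^ Suc k) x" by (simp only: funpow_Suc_right comp_def)
  finally show ?case .
qed

theorem lemma2p3:
  fixes G :: "('g, 'm) monoid_scheme"
    and k N :: nat and Gs :: "nat \<Rightarrow> 'g set" and xs :: "nat \<Rightarrow> 'g"
    and T :: "'a set" and d :: "'a \<Rightarrow> 'a \<Rightarrow> real" and act :: "'g \<Rightarrow> 'a \<Rightarrow> 'a"
    and Tn :: "nat \<Rightarrow> 'b set" and dn :: "nat \<Rightarrow> 'b \<Rightarrow> 'b \<Rightarrow> real" and actn :: "nat \<Rightarrow> 'g \<Rightarrow> 'b \<Rightarrow> 'b"
    and g :: 'g and p :: nat and a b :: 'a
  assumes "free_product_decomp G k Gs N xs"
    and "countable (carrier G)"
    and "GF_tree G k Gs T d act" and "minimal_action G T d act"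
    and "\<And>n. GF_tree G k Gs (Tn n) (dn n) (actn n)"
    and "\<And>n. minimal_action G (Tn n) (dn n) (actn n)"
    and "eqGH_converges G Tn dn actn T d act"
    and "g \<in> carrier G" and "p \<ge> 1"
    and "a \<in> T" and "b \<in> T" and "a \<noteq> b"
    and "\<forall>x\<in>seg T d a b. act (g [^]\<^bsub>G\<^esub> p) x = x"
    and "\<forall>\<^sub>F n in sequentially. hyperbolic (Tn n) (actn n) g"
  shows "\<forall>x\<in>seg T d a b. act g x = x"
proof
  fix x assume xs: "x \<in> seg T d a b"
  have grp: "group G" using assms(1) unfolding free_product_decomp_def by blast
  have g: "g \<in> carrier G" by (rule assms(8))
  have one: "\<one>\<^bsub>G\<^esub> \<in> carrier G" using monoid.one_closed[OF group.is_monoid[OF grp]] .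
  have gp: "g [^]\<^bsub>G\<^esub> p \<in> carrier G" using monoid.nat_pow_closed[OF group.is_monoid[OF grp] g] by blast
  have RT: "R_tree T d" and IA: "isometric_action G T d act"
    using assms(3) unfolding GF_tree_def by auto
  interpret M: Metric_space T d by (rule RT_metric[OF RT])
  have xT: "x \<in> T" using xs unfolding seg_def by auto
  have gxT: "act g x \<in> T" using IA g xT unfolding isometric_action_def by blast
  have act1: "act \<one>\<^bsub>G\<^esub> x = x" using IA xT unfolding isometric_action_def by blast
  have actp: "act (g [^]\<^bsub>G\<^esub> p) x = x" using assms(13) xs by blast
  show "act g x = x"
  proof (rule ccontr)
    assume ne: "act g x \<noteq> x"
    define del where "del = d x (act g x)"
    have "x \<noteq> act g x" using ne by simp
    then have "d x (act g x) \<noteq> 0" using xT gxT by simp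
    then have delp: "del > 0" unfolding del_def using M.nonneg[of x "act g x"] by linarith
    define P where "P = {\<one>\<^bsub>G\<^esub>, g, g [^]\<^bsub>G\<^esub> p}"
    have P: "finite P" "P \<subseteq> carrier G" using one g gp unfolding P_def by auto
    define Q where "Q = (\<lambda>n. \<exists>Kn R. finite Kn \<and> Kn \<subseteq> Tn n \<and> R \<subseteq> {x} \<times> Kn \<and>
           fst ` R = {x} \<and> snd ` R = Kn \<and>
           (\<forall>(y, y')\<in>R. \<forall>(z, z')\<in>R. \<forall>h1\<in>P. \<forall>h2\<in>P.
              \<bar>d (act h1 y) (act h2 z) - dn n (actn n h1 y') (actn n h2 z')\<bar> < del / 2))"
    have ev1: "eventually Q sequentially" unfolding Q_def
      by (rule assms(7)[unfolded eqGH_converges_def, rule_format, of "{x}" P "del / 2"])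
         (use P xT delp in auto)
    have "eventually (\<lambda>n. Q n \<and> hyperbolic (Tn n) (actn n) g) sequentially"
      by (rule eventually_conj[OF ev1 assms(14)])
    then obtain N where N: "\<forall>n\<ge>N. Q n \<and> hyperbolic (Tn n) (actn n) g"
      unfolding eventually_sequentially by (elim exE)
    define n where "n = N"
    have H: "Q n" and hyp: "hyperbolic (Tn n) (actn n) g" using N unfolding n_def by auto
    from H[unfolded Q_def] obtain Kn R where KRall: "finite Kn \<and> Kn \<subseteq> Tn n \<and> R \<subseteq> {x} \<times> Kn \<and>
           fst ` R = {x} \<and> snd ` R = Kn \<and>
           (\<forall>(y, y')\<in>R. \<forall>(z, z')\<in>R. \<forall>h1\<in>P. \<forall>h2\<in>P.
              \<bar>d (act h1 y) (act h2 z) - dn n (actn n h1 y') (actn n h2 z')\<bar> < del / 2)"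
      by (elim exE)
    have KR: "Kn \<subseteq> Tn n" "fst ` R = {x}" "snd ` R = Kn" using KRall by blast+
    have B: "\<forall>(y, y')\<in>R. \<forall>(z, z')\<in>R. \<forall>h1\<in>P. \<forall>h2\<in>P.
              \<bar>d (act h1 y) (act h2 z) - dn n (actn n h1 y') (actn n h2 z')\<bar> < del / 2"
      using KRall by (elim conjE)
    have "x \<in> fst ` R" using KR(2) by simp
    then obtain pr where pr: "pr \<in> R" "fst pr = x" by blast
    define x' where "x' = snd pr"
    have xR: "(x, x') \<in> R" using pr unfolding x'_def by (metis prod.collapse)
    have "x' \<in> snd ` R" using xR by (rule rev_image_eqI) simp
    then have x'T: "x' \<in> Tn n" using KR(1,3) by blast
    have "case (x, x') of (y, y') \<Rightarrow> \<forall>(z, z')\<in>R. \<forall>h1\<in>P. \<forall>h2\<in>P.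
              \<bar>d (act h1 y) (act h2 z) - dn n (actn n h1 y') (actn n h2 z')\<bar> < del / 2"
      using B xR by (rule bspec)
    then have "\<forall>(z, z')\<in>R. \<forall>h1\<in>P. \<forall>h2\<in>P.
              \<bar>d (act h1 x) (act h2 z) - dn n (actn n h1 x') (actn n h2 z')\<bar> < del / 2"
      by (simp only: prod.case)
    then have "case (x, x') of (z, z') \<Rightarrow> \<forall>h1\<in>P. \<forall>h2\<in>P.
              \<bar>d (act h1 x) (act h2 z) - dn n (actn n h1 x') (actn n h2 z')\<bar> < del / 2"
      using xR by (rule bspec)
    then have B': "\<forall>h1\<in>P. \<forall>h2\<in>P. \<bar>d (act h1 x) (act h2 x) - dn n (actn n h1 x') (actn n h2 x')\<bar> < del / 2"
      by (simp only: prod.case)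
    have RTn: "R_tree (Tn n) (dn n)" and IAn: "isometric_action G (Tn n) (dn n) (actn n)"
      using assms(5)[of n] unfolding GF_tree_def by auto
    have act1n: "actn n \<one>\<^bsub>G\<^esub> x' = x'" using IAn x'T unfolding isometric_action_def by blast
    have b1: "\<bar>d x (act g x) - dn n x' (actn n g x')\<bar> < del / 2"
      using B'[rule_format, of "\<one>\<^bsub>G\<^esub>" g] act1 act1n unfolding P_def by simp
    have b2: "\<bar>d x x - dn n x' (actn n (g [^]\<^bsub>G\<^esub> p) x')\<bar> < del / 2"
      using B'[rule_format, of "\<one>\<^bsub>G\<^esub>" "g [^]\<^bsub>G\<^esub> p"] act1 act1n actp unfolding P_def by simp
    have dxx: "d x x = 0" using xT by simp
    have pw: "actn n (g [^]\<^bsub>G\<^esub> p) x' = (actn n g ^^ p) x'"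
      by (rule pow_act[OF grp IAn g x'T])
    have mono: "dn n x' (actn n g x') \<le> dn n x' ((actn n g ^^ p) x')"
    proof (rule hyp_mono[OF RTn _ _ _ x'T assms(9)])
      show "\<And>y. y \<in> Tn n \<Longrightarrow> actn n g y \<in> Tn n" using IAn g unfolding isometric_action_def by blast
      show "\<And>y z. y \<in> Tn n \<Longrightarrow> z \<in> Tn n \<Longrightarrow> dn n (actn n g y) (actn n g z) = dn n y z"
        using IAn g unfolding isometric_action_def by blast
      show "\<And>y. y \<in> Tn n \<Longrightarrow> actn n g y \<noteq> y" using hyp unfolding hyperbolic_def by blast
    qed
    have c1: "d x (act g x) - dn n x' (actn n g x') < del / 2" using b1 unfolding abs_less_iff by blast
    have c2: "dn n x' ((actn n g ^^ p) x') < del / 2" using b2 unfolding pw dxx abs_less_iff by simp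
    show False using c1 c2 mono unfolding del_def by linarith
  qed
qed

end
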